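(* Let $1\le\alpha_1\le\dots\le\alpha_r\le n$ and $p:=\gamma^{\alpha_1}\cdots\gamma^{\alpha_r}\in V$. Then for every $m\ge1$ and $i_1,\dots,i_m\in\{1,\dots,n\}$, $$\widehat{x^{i_1}}\cdots\widehat{x^{i_m}}\cdot p=\big(\widehat{x^{i_1}}\cdots\widehat{x^{i_m}}\cdot1\big)\,p .$$
   Context: Fix $n\ge1$ and an invertible complex matrix $\eta=(\eta^{ij})$ with $\eta^{ij}=\eta^{ji}$ and inverse $(\eta_{ij})$. $\mathcal{A}=W(2n|n)$ is the associative superalgebra generated by even $x^1,\dots,x^n,\partial_1,\dots,\partial_n$ and odd $\gamma^1,\dots,\gamma^n$ with relations $x^ix^j=x^jx^i$, $\partial_i\partial_j=\partial_j\partial_i$, $\partial_ix^j-x^j\partial_i=\delta_i^j$, $\gamma^i$ commuting with $x^j,\partial_j$, $\gamma^i\gamma^j+\gamma^j\gamma^i=2\eta^{ij}$. Repeated indices are summed; $x_i=\eta_{ij}x^j$, $\partial^i=\eta^{ij}\partial_j$. $\mathcal{A}$ acts on $V=\mathrm{Cl}(\eta)\otimes\mathbb{C}[x^1,\dots,x^n]$ ($x^i,\gamma^i$ by left multiplication, $\partial_i$ by $\partial/\partial x^i$). $X=\frac{\sqrt{-1}}{\sqrt2}\gamma^i\partial_i$, $H=-\frac12(\partial_ix^i+x^i\partial_i)$, $E=-\frac12\partial^i\partial_i$, $V^+=\{v\in V:Xv=0\}$. $I=\mathcal{A}X+\mathcal{A}E$, $Z_n=N_{\mathcal{A}}(I)/I$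 acting on $V^+$; $\widehat{x^i}\in Z_n$ is the class of $(H+1)x^i+\frac12\gamma^jx_j\gamma^i+\frac12x^jx_j\partial^i$. The product $(\cdot)\,p$ is right multiplication in $V$ by $p\in\mathrm{Cl}(\eta)$. *)

theory Defs
  imports Complex_Main "HOL-Library.Poly_Mapping"
begin

text \<open>
  Concrete model of V = Cl(eta) (x) C[x^1,...,x^n].
  Clifford basis: strictly increasing lists S = [s1 < ... < sk] of indices in {1..n},
  standing for gamma^{s1} ... gamma^{sk}.  Polynomial basis: monomials x^a with
  exponent vector a :: nat =>0 nat.  An element of V is a finitely supported
  complex-valued function on pairs (S, a).
\<close>

type_synonym cl = "nat list \<Rightarrow>\<^sub>0 complex"
type_synonym vel = "(nat list \<times> (nat \<Rightarrow>\<^sub>0 nat)) \<Rightarrow>\<^sub>0 complex"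

definition cscale :: "complex \<Rightarrow> ('k \<Rightarrow>\<^sub>0 complex) \<Rightarrow> ('k \<Rightarrow>\<^sub>0 complex)" where
  "cscale c v = Poly_Mapping.map (\<lambda>z. c * z) v"

definition linext :: "('k \<Rightarrow> ('l \<Rightarrow>\<^sub>0 complex)) \<Rightarrow> ('k \<Rightarrow>\<^sub>0 complex) \<Rightarrow> ('l \<Rightarrow>\<^sub>0 complex)" where
  "linext f v = (\<Sum>k\<in>Poly_Mapping.keys v. cscale (Poly_Mapping.lookup v k) (f k))"

text \<open>Left multiplication of the basis element S (sorted, distinct) by gamma^i,
  using gamma^i gamma^i = eta^{ii} and gamma^i gamma^j = 2 eta^{ij} - gamma^j gamma^i.\<close>
primrec cl_ins :: "(nat \<Rightarrow> nat \<Rightarrow> complex) \<Rightarrow> nat \<Rightarrow> nat list \<Rightarrow> cl" where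
  "cl_ins eta i [] = Poly_Mapping.single [i] 1"
| "cl_ins eta i (j # S) =
     (if i < j then Poly_Mapping.single (i # j # S) 1
      else if i = j then Poly_Mapping.single S (eta i i)
      else Poly_Mapping.single S (2 * eta i j)
           - linext (\<lambda>T. Poly_Mapping.single (j # T) 1) (cl_ins eta i S))"

text \<open>Normal form (expansion in the basis) of a word gamma^{w1} ... gamma^{wk}.\<close>
primrec cl_nf :: "(nat \<Rightarrow> nat \<Rightarrow> complex) \<Rightarrow> nat list \<Rightarrow> cl" where
  "cl_nf eta [] = Poly_Mapping.single [] 1"
| "cl_nf eta (i # w) = linext (cl_ins eta i) (cl_nf eta w)"

text \<open>Tensor a Clifford element with the monomial x^a.\<close>
definition embed :: "cl \<Rightarrow> (nat \<Rightarrow>\<^sub>0 nat) \<Rightarrow> vel" where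
  "embed c a = linext (\<lambda>T. Poly_Mapping.single (T, a) 1) c"

definition V_one :: vel where
  "V_one = Poly_Mapping.single ([], 0) 1"

text \<open>The element p = gamma^{alpha1} ... gamma^{alphar} of V.\<close>
definition V_gword :: "(nat \<Rightarrow> nat \<Rightarrow> complex) \<Rightarrow> nat list \<Rightarrow> vel" where
  "V_gword eta w = embed (cl_nf eta w) 0"

text \<open>Action of the generators of W(2n|n) on V.\<close>
definition opx :: "nat \<Rightarrow> vel \<Rightarrow> vel" where
  "opx i = linext (\<lambda>(S, a). Poly_Mapping.single (S, a + Poly_Mapping.single i 1) 1)"

definition opd :: "nat \<Rightarrow> vel \<Rightarrow> vel" where
  "opd i = linext (\<lambda>(S, a).
      if Poly_Mapping.lookup a i = 0 then 0
      else Poly_Mapping.single (S, a - Poly_Mapping.single i 1) (of_nat (Poly_Mapping.lookup a i)))"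

definition opg :: "(nat \<Rightarrow> nat \<Rightarrow> complex) \<Rightarrow> nat \<Rightarrow> vel \<Rightarrow> vel" where
  "opg eta i = linext (\<lambda>(S, a). embed (cl_ins eta i S) a)"

text \<open>Right multiplication in V by the Clifford word gamma^{w1} ... gamma^{wk}.\<close>
definition rmul :: "(nat \<Rightarrow> nat \<Rightarrow> complex) \<Rightarrow> vel \<Rightarrow> nat list \<Rightarrow> vel" where
  "rmul eta v w = linext (\<lambda>(S, a). embed (cl_nf eta (S @ w)) a) v"

text \<open>x_j = eta_{jk} x^k and partial^i = eta^{ij} partial_j (etainv = (eta_{ij})).\<close>
definition opxlow :: "nat \<Rightarrow> (nat \<Rightarrow> nat \<Rightarrow> complex) \<Rightarrow> nat \<Rightarrow> vel \<Rightarrow> vel" where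
  "opxlow n etainv j v = (\<Sum>k=1..n. cscale (etainv j k) (opx k v))"

definition opdup :: "nat \<Rightarrow> (nat \<Rightarrow> nat \<Rightarrow> complex) \<Rightarrow> nat \<Rightarrow> vel \<Rightarrow> vel" where
  "opdup n eta i v = (\<Sum>j=1..n. cscale (eta i j) (opd j v))"

definition opH :: "nat \<Rightarrow> vel \<Rightarrow> vel" where
  "opH n v = cscale (- 1/2) (\<Sum>i=1..n. opd i (opx i v) + opx i (opd i v))"

text \<open>Action on V of the representative
  (H+1) x^i + 1/2 gamma^j x_j gamma^i + 1/2 x^j x_j partial^i of the class hat(x^i).\<close>
definition xhat :: "nat \<Rightarrow> (nat \<Rightarrow> nat \<Rightarrow> complex) \<Rightarrow> (nat \<Rightarrow> nat \<Rightarrow> complex) \<Rightarrow> nat \<Rightarrow> vel \<Rightarrow> vel" where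
  "xhat n eta etainv i v =
     opH n (opx i v) + opx i v
     + cscale (1/2) (\<Sum>j=1..n. opg eta j (opxlow n etainv j (opg eta i v)))
     + cscale (1/2) (\<Sum>j=1..n. opx j (opxlow n etainv j (opdup n eta i v)))"

end

theory Submission
  imports Defs
begin


lemma lookup_cscale[simp]: "Poly_Mapping.lookup (cscale c v) k = c * Poly_Mapping.lookup v k"
  unfolding cscale_def by (simp add: map.rep_eq when_def)

lemma cscale_add: "cscale c (a + b) = cscale c a + cscale c b"
  by (rule poly_mapping_eqI) (simp add: lookup_add algebra_simps)
lemma cscale_addc: "cscale (c + d) a = cscale c a + cscale d a"
  by (rule poly_mapping_eqI) (simp add: lookup_add algebra_simps)
lemma cscale_diff: "cscale c (a - b) = cscale c a - cscale c b"
  by (rule poly_mapping_eqI) (simp add: lookup_minus algebra_simps)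
lemma cscale_cscale: "cscale c (cscale d a) = cscale (c * d) a"
  by (rule poly_mapping_eqI) simp
lemma cscale_one[simp]: "cscale 1 a = a"
  by (rule poly_mapping_eqI) simp
lemma cscale_zero[simp]: "cscale 0 a = 0"
  by (rule poly_mapping_eqI) simp
lemma cscale_zero2[simp]: "cscale c 0 = 0"
  by (rule poly_mapping_eqI) simp
lemma cscale_single: "cscale c (Poly_Mapping.single k d) = Poly_Mapping.single k (c * d)"
  by (rule poly_mapping_eqI) (simp add: lookup_single when_def)

lemma lookup_linext:
  "Poly_Mapping.lookup (linext f v) l = (\<Sum>k\<in>Poly_Mapping.keys v. Poly_Mapping.lookup v k * Poly_Mapping.lookup (f k) l)"
  unfolding linext_def by (simp add: lookup_sum)

lemma lookup_linext_sup:
  assumes "finite A" "Poly_Mapping.keys v \<subseteq> A"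
  shows "Poly_Mapping.lookup (linext f v) l = (\<Sum>k\<in>A. Poly_Mapping.lookup v k * Poly_Mapping.lookup (f k) l)"
  unfolding lookup_linext
  by (rule sum.mono_neutral_left) (use assms in \<open>auto simp: in_keys_iff\<close>)

definition lin :: "(('k \<Rightarrow>\<^sub>0 complex) \<Rightarrow> ('l \<Rightarrow>\<^sub>0 complex)) \<Rightarrow> bool" where
  "lin F \<longleftrightarrow> (\<forall>a b. F (a + b) = F a + F b) \<and> (\<forall>c a. F (cscale c a) = cscale c (F a))"

lemma linD: assumes "lin F"
  shows "F (a + b) = F a + F b" "F (cscale c a) = cscale c (F a)" "F 0 = 0"
    "F (a - b) = F a - F b" "F (- a) = - F a"
proof -
  show 1: "F (a + b) = F a + F b" "F (cscale c a) = cscale c (F a)" using assms by (auto simp: lin_def)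
  from assms have "F (cscale 0 0) = cscale 0 (F 0)" unfolding lin_def by blast
  then show z: "F 0 = 0" by simp
  have "F a = F ((a - b) + b)" by simp
  also have "\<dots> = F (a - b) + F b" using assms by (simp only: lin_def)
  finally show "F (a - b) = F a - F b" by (simp add: eq_diff_eq)
  have "0 = F (- a + a)" using z by simp
  also have "\<dots> = F (- a) + F a" using assms by (simp only: lin_def)
  finally show "F (- a) = - F a" by (simp add: eq_neg_iff_add_eq_0)
qed

lemma lin_sum: assumes "lin F" shows "F (sum g A) = (\<Sum>x\<in>A. F (g x))"
proof (induction A rule: infinite_finite_induct)
  case (infinite A) then show ?case using linD[OF assms] by simp
next
  case empty then show ?case using linD[OF assms] by simp
next
  case (insert x A) then show ?case using linD[OF assms] by simp
qed

lemma lin_linext: "lin (linext f)"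
  unfolding lin_def
proof (intro conjI allI)
  fix a b
  show "linext f (a + b) = linext f a + linext f b"
  proof (rule poly_mapping_eqI)
    fix l
    let ?A = "Poly_Mapping.keys a \<union> Poly_Mapping.keys b \<union> Poly_Mapping.keys (a + b)"
    have fa: "finite ?A" by simp
    have e1: "Poly_Mapping.lookup (linext f (a + b)) l = (\<Sum>k\<in>?A. Poly_Mapping.lookup (a + b) k * Poly_Mapping.lookup (f k) l)"
      by (rule lookup_linext_sup[OF fa]) blast
    have e2: "Poly_Mapping.lookup (linext f a) l = (\<Sum>k\<in>?A. Poly_Mapping.lookup a k * Poly_Mapping.lookup (f k) l)"
      by (rule lookup_linext_sup[OF fa]) blast
    have e3: "Poly_Mapping.lookup (linext f b) l = (\<Sum>k\<in>?A. Poly_Mapping.lookup b k * Poly_Mapping.lookup (f k) l)"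
      by (rule lookup_linext_sup[OF fa]) blast
    show "Poly_Mapping.lookup (linext f (a + b)) l = Poly_Mapping.lookup (linext f a + linext f b) l"
      unfolding lookup_add e1 e2 e3 sum.distrib[symmetric] distrib_right ..
  qed
next
  fix c a
  show "linext f (cscale c a) = cscale c (linext f a)"
  proof (rule poly_mapping_eqI)
    fix l
    let ?A = "Poly_Mapping.keys a \<union> Poly_Mapping.keys (cscale c a)"
    have fa: "finite ?A" by simp
    have e1: "Poly_Mapping.lookup (linext f (cscale c a)) l = (\<Sum>k\<in>?A. Poly_Mapping.lookup (cscale c a) k * Poly_Mapping.lookup (f k) l)"
      by (rule lookup_linext_sup[OF fa]) blast
    have e2: "Poly_Mapping.lookup (linext f a) l = (\<Sum>k\<in>?A. Poly_Mapping.lookup a k * Poly_Mapping.lookup (f k) l)"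
      by (rule lookup_linext_sup[OF fa]) blast
    show "Poly_Mapping.lookup (linext f (cscale c a)) l = Poly_Mapping.lookup (cscale c (linext f a)) l"
      unfolding lookup_cscale e1 e2 sum_distrib_left mult.assoc ..
  qed
qed

lemma linext_comp: assumes "lin F" shows "F (linext f v) = linext (\<lambda>k. F (f k)) v"
  unfolding linext_def lin_sum[OF assms] linD(2)[OF assms] ..

lemma linext_single_id: "linext (\<lambda>k. Poly_Mapping.single k 1) v = v"
proof (rule poly_mapping_eqI)
  fix l
  have "(\<Sum>x\<in>Poly_Mapping.keys v. Poly_Mapping.lookup v x * Poly_Mapping.lookup (Poly_Mapping.single x 1) l)
      = (\<Sum>x\<in>Poly_Mapping.keys v. if x = l then Poly_Mapping.lookup v x else 0)"
    by (rule sum.cong) (auto simp: lookup_single when_def)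
  also have "\<dots> = Poly_Mapping.lookup v l"
    by (simp add: sum.delta in_keys_iff)
  finally show "Poly_Mapping.lookup (linext (\<lambda>k. Poly_Mapping.single k 1) v) l = Poly_Mapping.lookup v l"
    unfolding lookup_linext .
qed

lemma linext_single: "linext f (Poly_Mapping.single k c) = cscale c (f k)"
  unfolding linext_def by auto

lemma linext_cong: "(\<And>k. k \<in> Poly_Mapping.keys v \<Longrightarrow> f k = g k) \<Longrightarrow> linext f v = linext g v"
  unfolding linext_def by simp

lemma lin_ext: assumes "lin F" "lin G" "\<And>k. k \<in> Poly_Mapping.keys v \<Longrightarrow> F (Poly_Mapping.single k 1) = G (Poly_Mapping.single k 1)"
  shows "F v = G v"
proof -
  have "F v = F (linext (\<lambda>k. Poly_Mapping.single k 1) v)" by (simp add: linext_single_id)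
  also have "\<dots> = linext (\<lambda>k. F (Poly_Mapping.single k 1)) v" by (rule linext_comp[OF assms(1)])
  also have "\<dots> = linext (\<lambda>k. G (Poly_Mapping.single k 1)) v" by (rule linext_cong) (use assms(3) in auto)
  also have "\<dots> = G (linext (\<lambda>k. Poly_Mapping.single k 1) v)" by (rule linext_comp[OF assms(2), symmetric])
  finally show ?thesis by (simp add: linext_single_id)
qed

lemma linext_linext: "linext g (linext f v) = linext (\<lambda>k. linext g (f k)) v"
  by (rule linext_comp[OF lin_linext])

lemma keys_linext: "Poly_Mapping.keys (linext f v) \<subseteq> (\<Union>k\<in>Poly_Mapping.keys v. Poly_Mapping.keys (f k))"
proof
  fix l assume "l \<in> Poly_Mapping.keys (linext f v)"
  then have ne: "(\<Sum>k\<in>Poly_Mapping.keys v. Poly_Mapping.lookup v k * Poly_Mapping.lookup (f k) l) \<noteq> 0"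
    by (simp add: in_keys_iff lookup_linext)
  have "\<exists>k\<in>Poly_Mapping.keys v. Poly_Mapping.lookup v k * Poly_Mapping.lookup (f k) l \<noteq> 0"
  proof (rule ccontr)
    assume "\<not> ?thesis"
    then have "(\<Sum>k\<in>Poly_Mapping.keys v. Poly_Mapping.lookup v k * Poly_Mapping.lookup (f k) l) = 0"
      by (intro sum.neutral) simp
    with ne show False by contradiction
  qed
  then show "l \<in> (\<Union>k\<in>Poly_Mapping.keys v. Poly_Mapping.keys (f k))" by (auto simp: in_keys_iff)
qed

lemma lin_comp: "lin F \<Longrightarrow> lin G \<Longrightarrow> lin (\<lambda>v. F (G v))"
  unfolding lin_def by simp
lemma lin_add: "lin F \<Longrightarrow> lin G \<Longrightarrow> lin (\<lambda>v. F v + G v)"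
  unfolding lin_def by (simp add: cscale_add add_ac)




lemma linext_cscale_fun: "linext (\<lambda>k. cscale a (g k)) c = cscale a (linext g c)"
  by (rule poly_mapping_eqI) (simp add: lookup_linext sum_distrib_left mult.left_commute)

lemma linext_diff_fun: "linext (\<lambda>k. f k - g k) c = linext f c - linext g c"
  by (rule poly_mapping_eqI) (simp add: lookup_linext lookup_minus right_diff_distrib sum_subtractf)

lemma lin_cscale: "lin (cscale c)"
  unfolding lin_def by (simp add: cscale_add cscale_cscale mult.commute)

lemma cscale_double: "cscale a X + cscale a X = cscale (2 * a) X"
  by (rule poly_mapping_eqI) (simp add: lookup_add)
lemma single_double: "Poly_Mapping.single k (a::complex) + Poly_Mapping.single k a = Poly_Mapping.single k (2 * a)"
  by (rule poly_mapping_eqI) (simp add: lookup_add lookup_single when_def)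

lemma single_cscale: "Poly_Mapping.single k c = cscale c (Poly_Mapping.single k 1)"
  by (simp add: cscale_single)

context fixes eta :: "nat \<Rightarrow> nat \<Rightarrow> complex"
begin

definition L :: "nat \<Rightarrow> cl \<Rightarrow> cl" where "L i = linext (cl_ins eta i)"
definition P :: "nat \<Rightarrow> cl \<Rightarrow> cl" where "P s = linext (\<lambda>T. Poly_Mapping.single (s # T) 1)"
definition E :: "nat \<Rightarrow> nat \<Rightarrow> complex" where "E i j = (if i \<le> j then eta j i else eta i j)"

lemma lin_L: "lin (L i)" unfolding L_def by (rule lin_linext)
lemma lin_P: "lin (P i)" unfolding P_def by (rule lin_linext)

lemma L_single: "L i (Poly_Mapping.single T 1) = cl_ins eta i T"
  unfolding L_def by (simp add: linext_single)
lemma P_single: "P i (Poly_Mapping.single T c) = Poly_Mapping.single (i # T) c"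
  unfolding P_def by (simp add: linext_single cscale_single)

lemma K1: "sorted_wrt (<) T \<Longrightarrow> U \<in> Poly_Mapping.keys (cl_ins eta i T) \<Longrightarrow> sorted_wrt (<) U \<and> set U \<subseteq> insert i (set T)"
proof (induction T arbitrary: U)
  case Nil then show ?case by (simp split: if_splits)
next
  case (Cons j S)
  show ?case
  proof (cases "i < j")
    case True
    then have U: "U = i # j # S" using Cons.prems by (simp split: if_splits)
    have "\<forall>x\<in>set S. j < x" "sorted_wrt (<) S" using Cons.prems by auto
    then have "\<forall>x\<in>set S. i < x" using True by (metis less_trans)
    then show ?thesis using U True Cons.prems by simp
  next
    case False
    show ?thesis
    proof (cases "i = j")
      case True then show ?thesis using Cons.prems by (auto split: if_splits)
    next
      case ne: False
      with False have "U \<in> Poly_Mapping.keys (Poly_Mapping.single S (2 * eta i j) - linext (\<lambda>T. Poly_Mapping.single (j # T) 1) (cl_ins eta i S))"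
        using Cons.prems by simp
      then have "U \<in> Poly_Mapping.keys (Poly_Mapping.single S (2 * eta i j)) \<or> U \<in> Poly_Mapping.keys (linext (\<lambda>T. Poly_Mapping.single (j # T) 1) (cl_ins eta i S))"
        by (rule UnE[OF subsetD[OF keys_diff]]) (rule disjI1, assumption, rule disjI2, assumption)
      then show ?thesis
      proof
        assume "U \<in> Poly_Mapping.keys (Poly_Mapping.single S (2 * eta i j))"
        then have "U = S" by (simp split: if_splits)
        then show ?thesis using Cons.prems by auto
      next
        assume "U \<in> Poly_Mapping.keys (linext (\<lambda>T. Poly_Mapping.single (j # T) 1) (cl_ins eta i S))"
        then have "U \<in> (\<Union>V\<in>Poly_Mapping.keys (cl_ins eta i S). Poly_Mapping.keys (Poly_Mapping.single (j # V) (1::complex)))"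
          by (rule subsetD[OF keys_linext])
        then obtain V where V: "V \<in> Poly_Mapping.keys (cl_ins eta i S)" "U \<in> Poly_Mapping.keys (Poly_Mapping.single (j # V) (1::complex))"
          by (rule UN_E) (rule that)
        from V(2) have V2: "U = j # V" by simp
        have "sorted_wrt (<) V \<and> set V \<subseteq> insert i (set S)" using Cons.IH[OF _ V(1)] Cons.prems by simp
        moreover have "\<forall>x\<in>set S. j < x" using Cons.prems by simp
        moreover have "j < i" using False ne by simp
        ultimately have "\<forall>x\<in>set V. j < x" by (metis insert_iff subsetD)
        then show ?thesis using V2 \<open>sorted_wrt (<) V \<and> set V \<subseteq> insert i (set S)\<close> by auto
      qed
    qed
  qed
qed

definition good :: "cl \<Rightarrow> bool" where "good c \<longleftrightarrow> (\<forall>T\<in>Poly_Mapping.keys c. sorted_wrt (<) T)"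

lemma good_L: "good c \<Longrightarrow> good (L i c)"
  unfolding good_def L_def using keys_linext K1 by fastforce

lemma ci_lt: "T = [] \<or> i < hd T \<Longrightarrow> cl_ins eta i T = Poly_Mapping.single (i # T) 1"
  by (cases T) auto
lemma ci_eq: "cl_ins eta i (i # T) = Poly_Mapping.single T (eta i i)"
  by simp
lemma ci_gt: "s < i \<Longrightarrow> cl_ins eta i (s # T) = Poly_Mapping.single T (2 * eta i s) - P s (cl_ins eta i T)"
  by (simp add: P_def)

lemma LP_lt: "(\<And>T. T \<in> Poly_Mapping.keys c \<Longrightarrow> T = [] \<or> i < hd T) \<Longrightarrow> L i c = P i c"
  unfolding L_def P_def by (rule linext_cong) (simp add: ci_lt)

lemma LP_eq: "L s (P s c) = cscale (eta s s) c"
proof -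
  have "L s (P s c) = linext (\<lambda>T. L s (Poly_Mapping.single (s # T) 1)) c"
    unfolding P_def by (rule linext_comp[OF lin_L])
  also have "\<dots> = linext (\<lambda>T. cscale (eta s s) (Poly_Mapping.single T 1)) c"
    by (simp add: L_single cscale_single)
  also have "\<dots> = cscale (eta s s) c" by (simp add: linext_cscale_fun linext_single_id)
  finally show ?thesis .
qed

lemma LP_gt: "s < i \<Longrightarrow> L i (P s c) = cscale (2 * eta i s) c - P s (L i c)"
proof -
  assume si: "s < i"
  have "L i (P s c) = linext (\<lambda>T. L i (Poly_Mapping.single (s # T) 1)) c"
    unfolding P_def by (rule linext_comp[OF lin_L])
  also have "\<dots> = linext (\<lambda>T. cscale (2 * eta i s) (Poly_Mapping.single T 1) - P s (cl_ins eta i T)) c"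
    using si by (simp add: L_single ci_gt cscale_single ci_eq del: cl_ins.simps)
  also have "\<dots> = cscale (2 * eta i s) c - linext (\<lambda>T. P s (cl_ins eta i T)) c"
    by (simp add: linext_diff_fun linext_cscale_fun linext_single_id)
  also have "linext (\<lambda>T. P s (cl_ins eta i T)) c = P s (L i c)"
    unfolding L_def by (rule linext_comp[OF lin_P, symmetric])
  finally show ?thesis .
qed


lemma L_single_c: "L i (Poly_Mapping.single T c) = cscale c (cl_ins eta i T)"
  by (subst single_cscale) (simp add: linD[OF lin_L] L_single)

lemma E_sym: "E i j = E j i"
  unfolding E_def by auto

lemma hd_less: assumes "sorted_wrt (<) ((s::nat) # S')" "z \<le> s" shows "S' = [] \<or> z < hd S'"
proof (cases S')
  case (Cons a l)
  with assms have "s < a" by simp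
  with assms(2) Cons show ?thesis by simp
qed simp

lemma rel_small:
  assumes "S = [] \<or> j < hd S" "i \<le> j"
  shows "L i (cl_ins eta j S) + L j (cl_ins eta i S) = cscale (2 * E i j) (Poly_Mapping.single S 1)"
proof (cases "i < j")
  case True
  have ij: "S = [] \<or> i < hd S" using assms True by auto
  have a: "L i (cl_ins eta j S) = Poly_Mapping.single (i # j # S) 1"
    using True by (simp add: ci_lt[OF assms(1)] L_single)
  have b: "L j (cl_ins eta i S) = Poly_Mapping.single S (2 * eta j i) - Poly_Mapping.single (i # j # S) 1"
    using True by (simp add: ci_lt[OF ij] L_single ci_gt ci_lt[OF assms(1)] P_single ci_eq del: cl_ins.simps)
  show ?thesis unfolding a b using True by (simp add: E_def cscale_single)
next
  case False
  then have ij: "i = j" using assms by simp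
  have a: "L i (cl_ins eta i S) = Poly_Mapping.single S (eta i i)"
    by (simp add: ci_lt[OF assms(1)[unfolded ij[symmetric]]] L_single ci_eq ci_eq del: cl_ins.simps)
  show ?thesis unfolding ij[symmetric] a
    by (simp add: E_def cscale_single single_double)
qed

lemma rel_le: "sorted_wrt (<) S \<Longrightarrow> i \<le> j \<Longrightarrow>
  L i (cl_ins eta j S) + L j (cl_ins eta i S) = cscale (2 * E i j) (Poly_Mapping.single S 1)"
proof (induction S arbitrary: i j)
  case Nil then show ?case using rel_small[of "[]" j i] by simp
next
  case (Cons s S')
  note srt = Cons.prems(1)
  note ij = Cons.prems(2)
  have sS': "sorted_wrt (<) S'" using srt by simp
  show ?case
  proof (cases "j < s")
    case True then show ?thesis using rel_small[of "s # S'" j i] ij by simp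
  next
    case js: False
    show ?thesis
    proof (cases "i < s")
      case iS: True
      show ?thesis
      proof (cases "s = j")
        case True
        have h: "S' = [] \<or> i < hd S'" using hd_less[OF srt, of i] iS by simp
        have a: "L i (cl_ins eta j (s # S')) = cscale (eta s s) (Poly_Mapping.single (i # S') 1)"
          using True by (simp add: L_single_c ci_lt[OF h] ci_eq del: cl_ins.simps)
        have b: "L j (cl_ins eta i (s # S')) = Poly_Mapping.single (s # S') (2 * eta s i) - Poly_Mapping.single (i # S') (eta s s)"
          using True iS by (simp add: L_single ci_lt ci_gt P_single ci_eq del: cl_ins.simps)
        show ?thesis unfolding a b using True iS by (simp add: E_def cscale_single)
      next
        case False
        then have sj: "s < j" using js by simp
        define X where "X = cl_ins eta j (s # S')"
        have kX: "\<And>T. T \<in> Poly_Mapping.keys X \<Longrightarrow> T = [] \<or> i < hd T"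
        proof -
          fix T assume "T \<in> Poly_Mapping.keys X"
          then have T: "sorted_wrt (<) T \<and> set T \<subseteq> insert j (set (s # S'))"
            using K1[OF srt] unfolding X_def by blast
          show "T = [] \<or> i < hd T"
          proof (cases T)
            case (Cons t T')
            then have "t \<in> insert j (set (s # S'))" using T by auto
            moreover have "\<forall>x\<in>set S'. s < x" using srt by simp
            ultimately have "i < t" using iS sj by auto
            then show ?thesis using Cons by simp
          qed simp
        qed
        have a: "L i X = P i X" by (rule LP_lt[OF kX])
        have b: "L j (cl_ins eta i (s # S')) = Poly_Mapping.single (s # S') (2 * eta j i) - P i X"
          using iS sj unfolding X_def by (simp add: L_single ci_lt ci_gt ci_eq del: cl_ins.simps)
        show ?thesis unfolding X_def[symmetric] a b using iS sj by (simp add: E_def cscale_single)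
      qed
    next
      case False
      show ?thesis
      proof (cases "i = s")
        case iS: True
        show ?thesis
        proof (cases "j = s")
          case True
          have h: "S' = [] \<or> s < hd S'" using hd_less[OF srt, of s] by simp
          have a: "L s (cl_ins eta s (s # S')) = cscale (eta s s) (Poly_Mapping.single (s # S') 1)"
            by (simp add: L_single_c ci_lt[OF h] ci_eq del: cl_ins.simps)
          show ?thesis unfolding iS True a
            by (simp add: E_def cscale_double)
        next
          case False
          then have sj: "s < j" using js by simp
          have h: "S' = [] \<or> s < hd S'" using hd_less[OF srt, of s] by simp
          define Y where "Y = cl_ins eta j S'"
          have a: "L s (cl_ins eta j (s # S')) = cscale (2 * eta j s) (Poly_Mapping.single (s # S') 1) - cscale (eta s s) Y"
            using sj unfolding Y_def
            by (simp add: ci_gt linD[OF lin_L] L_single_c ci_lt[OF h] LP_eq ci_eq del: cl_ins.simps)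
          have b: "L j (cl_ins eta s (s # S')) = cscale (eta s s) Y"
            unfolding Y_def by (simp add: L_single_c ci_eq del: cl_ins.simps)
          show ?thesis unfolding iS a b using sj by (simp add: E_def)
        qed
      next
        case False
        then have si: "s < i" using \<open>\<not> i < s\<close> by simp
        have sj: "s < j" using si ij by simp
        define Yi where "Yi = cl_ins eta i S'"
        define Yj where "Yj = cl_ins eta j S'"
        have a: "L i (cl_ins eta j (s # S')) = cscale (2 * eta j s) Yi - (cscale (2 * eta i s) Yj - P s (L i Yj))"
          using sj si unfolding Yi_def Yj_def
          by (simp add: ci_gt linD[OF lin_L] L_single_c LP_gt ci_eq del: cl_ins.simps)
        have b: "L j (cl_ins eta i (s # S')) = cscale (2 * eta i s) Yj - (cscale (2 * eta j s) Yi - P s (L j Yi))"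
          using sj si unfolding Yi_def Yj_def
          by (simp add: ci_gt linD[OF lin_L] L_single_c LP_gt ci_eq del: cl_ins.simps)
        have IH: "L i Yj + L j Yi = cscale (2 * E i j) (Poly_Mapping.single S' 1)"
          unfolding Yi_def Yj_def by (rule Cons.IH[OF sS' ij])
        have "L i (cl_ins eta j (s # S')) + L j (cl_ins eta i (s # S')) = P s (L i Yj) + P s (L j Yi)"
          unfolding a b by (simp add: algebra_simps)
        also have "\<dots> = P s (L i Yj + L j Yi)" by (simp add: linD[OF lin_P])
        also have "\<dots> = cscale (2 * E i j) (Poly_Mapping.single (s # S') 1)"
          unfolding IH by (simp add: linD[OF lin_P] P_single)
        finally show ?thesis .
      qed
    qed
  qed
qed

lemma rel_basis: "sorted_wrt (<) S \<Longrightarrow>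
  L i (cl_ins eta j S) + L j (cl_ins eta i S) = cscale (2 * E i j) (Poly_Mapping.single S 1)"
proof (cases "i \<le> j")
  case True
  assume "sorted_wrt (<) S" then show ?thesis using rel_le True by simp
next
  case False
  assume "sorted_wrt (<) S"
  then have "L j (cl_ins eta i S) + L i (cl_ins eta j S) = cscale (2 * E j i) (Poly_Mapping.single S 1)"
    using rel_le False by simp
  then show ?thesis by (simp add: E_sym add.commute)
qed

lemma rel_good: assumes "good y" shows "L i (L j y) + L j (L i y) = cscale (2 * E i j) y"
proof (rule lin_ext[where F="\<lambda>y. L i (L j y) + L j (L i y)" and G="cscale (2 * E i j)"])
  show "lin (\<lambda>y. L i (L j y) + L j (L i y))" by (rule lin_add; rule lin_comp[OF lin_L lin_L])
  show "lin (cscale (2 * E i j))" by (rule lin_cscale)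
  fix k assume "k \<in> Poly_Mapping.keys y"
  then have "sorted_wrt (<) k" using assms unfolding good_def by simp
  then show "L i (L j (Poly_Mapping.single k 1)) + L j (L i (Poly_Mapping.single k 1)) = cscale (2 * E i j) (Poly_Mapping.single k 1)"
    by (simp add: L_single rel_basis del: cl_ins.simps)
qed

end



lemma lin_id: "lin (\<lambda>x. x)" unfolding lin_def by simp

lemma half_eq:
  assumes "z + z = cscale (2 * a) y" shows "z = cscale a y"
proof (rule poly_mapping_eqI)
  fix k
  have "Poly_Mapping.lookup (z + z) k = Poly_Mapping.lookup (cscale (2 * a) y) k" using assms by simp
  then have "2 * Poly_Mapping.lookup z k = 2 * (a * Poly_Mapping.lookup y k)" by (simp add: lookup_add)
  then show "Poly_Mapping.lookup z k = Poly_Mapping.lookup (cscale a y) k" by simp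
qed

context fixes eta :: "nat \<Rightarrow> nat \<Rightarrow> complex"
begin

primrec LL :: "nat list \<Rightarrow> cl \<Rightarrow> cl" where
  "LL [] x = x"
| "LL (t # T) x = L eta t (LL T x)"

lemma cl_nf_app: "cl_nf eta (T @ w) = LL T (cl_nf eta w)"
  by (induction T) (simp_all add: L_def)

lemma good_LL: "good x \<Longrightarrow> good (LL T x)"
  by (induction T) (simp_all add: good_L)

lemma good_nf: "good (cl_nf eta w)"
proof (induction w)
  case Nil then show ?case by (simp add: good_def)
next
  case (Cons i w)
  have "cl_nf eta (i # w) = L eta i (cl_nf eta w)" by (simp add: L_def)
  then show ?case using good_L[OF Cons] by simp
qed

lemma B_lemma: "good x \<Longrightarrow> L eta j (LL S x) = linext (\<lambda>T. LL T x) (cl_ins eta j S)"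
proof (induction S)
  case Nil then show ?case by (simp add: linext_single)
next
  case (Cons s S')
  define y where "y = LL S' x"
  have gy: "good y" unfolding y_def by (rule good_LL[OF Cons.prems])
  show ?case
  proof (cases "j < s")
    case True then show ?thesis by (simp add: linext_single)
  next
    case False
    show ?thesis
    proof (cases "j = s")
      case True
      have "L eta s (L eta s y) + L eta s (L eta s y) = cscale (2 * eta s s) y"
        using rel_good[where eta=eta and i=s and j=s, OF gy] by (simp add: E_def)
      then have "L eta s (L eta s y) = cscale (eta s s) y" by (rule half_eq)
      then show ?thesis using True by (simp add: linext_single y_def)
    next
      case ne: False
      then have sj: "s < j" using False by simp
      have r: "L eta j (L eta s y) + L eta s (L eta j y) = cscale (2 * eta j s) y"
        using rel_good[where eta=eta and i=j and j=s, OF gy] sj by (simp add: E_def)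
      have lhs: "L eta j (LL (s # S') x) = cscale (2 * eta j s) y - L eta s (L eta j y)"
        using r by (simp add: y_def eq_diff_eq)
      have c: "cl_ins eta j (s # S') = Poly_Mapping.single S' (2 * eta j s) - P s (cl_ins eta j S')"
        using sj by (simp add: P_def)
      have pp: "linext (\<lambda>T. LL T x) (P s c) = L eta s (linext (\<lambda>T. LL T x) c)" for c
      proof -
        have "linext (\<lambda>T. LL T x) (P s c) = linext (\<lambda>k. linext (\<lambda>T. LL T x) (Poly_Mapping.single (s # k) 1)) c"
          unfolding P_def by (rule linext_linext)
        also have "\<dots> = linext (\<lambda>k. L eta s (LL k x)) c" by (simp add: linext_single)
        also have "\<dots> = L eta s (linext (\<lambda>T. LL T x) c)" by (rule linext_comp[OF lin_L, symmetric])
        finally show ?thesis .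
      qed
      have "linext (\<lambda>T. LL T x) (cl_ins eta j (s # S')) = cscale (2 * eta j s) y - L eta s (L eta j y)"
        unfolding c linD(4)[OF lin_linext] pp Cons.IH[OF Cons.prems, symmetric]
        by (simp add: linext_single y_def)
      then show ?thesis using lhs by simp
    qed
  qed
qed

lemma A_lemma: "cl_nf eta (j # S @ w) = linext (\<lambda>T. cl_nf eta (T @ w)) (cl_ins eta j S)"
proof -
  have "cl_nf eta (j # S @ w) = L eta j (LL S (cl_nf eta w))"
    by (simp add: L_def cl_nf_app[symmetric])
  also have "\<dots> = linext (\<lambda>T. LL T (cl_nf eta w)) (cl_ins eta j S)"
    by (rule B_lemma[OF good_nf])
  finally show ?thesis by (simp add: cl_nf_app)
qed

end



lemma lin_rmul: "lin (\<lambda>v. rmul eta v w)"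
  unfolding rmul_def by (rule lin_linext)
lemma lin_opx: "lin (opx i)" unfolding opx_def by (rule lin_linext)
lemma lin_opd: "lin (opd i)" unfolding opd_def by (rule lin_linext)
lemma lin_opg: "lin (opg eta i)" unfolding opg_def by (rule lin_linext)
lemma lin_embed: "lin (\<lambda>c. embed c a)" unfolding embed_def by (rule lin_linext)

lemma rmul_single: "rmul eta (Poly_Mapping.single (S, a) 1) w = embed (cl_nf eta (S @ w)) a"
  by (simp add: rmul_def linext_single)
lemma opx_single: "opx k (Poly_Mapping.single (T, a) 1) = Poly_Mapping.single (T, a + Poly_Mapping.single k 1) 1"
  by (simp add: opx_def linext_single)
lemma opd_single: "opd i (Poly_Mapping.single (T, a) 1) =
    cscale (of_nat (Poly_Mapping.lookup a i)) (Poly_Mapping.single (T, a - Poly_Mapping.single i 1) 1)"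
  by (simp add: opd_def linext_single cscale_single)
lemma opg_single: "opg eta j (Poly_Mapping.single (T, a) 1) = embed (cl_ins eta j T) a"
  by (simp add: opg_def linext_single)

lemma F_embed: "lin F \<Longrightarrow> F (embed c a) = linext (\<lambda>T. F (Poly_Mapping.single (T, a) 1)) c"
  unfolding embed_def by (rule linext_comp)

lemma opx_embed: "opx k (embed c a) = embed c (a + Poly_Mapping.single k 1)"
  by (subst F_embed[OF lin_opx]) (simp add: opx_single embed_def)
lemma opd_embed: "opd i (embed c a) = cscale (of_nat (Poly_Mapping.lookup a i)) (embed c (a - Poly_Mapping.single i 1))"
  by (subst F_embed[OF lin_opd]) (simp add: opd_single embed_def linext_cscale_fun)
lemma opg_embed: "opg eta j (embed c a) = embed (L eta j c) a"
proof -
  have "embed (L eta j c) a = linext (\<lambda>T. embed (cl_ins eta j T) a) c"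
    unfolding L_def by (rule linext_comp[OF lin_embed])
  then show ?thesis by (simp add: F_embed[OF lin_opg] opg_single)
qed
lemma rmul_embed: "rmul eta (embed c a) w = embed (linext (\<lambda>T. cl_nf eta (T @ w)) c) a"
proof -
  have "embed (linext (\<lambda>T. cl_nf eta (T @ w)) c) a = linext (\<lambda>T. embed (cl_nf eta (T @ w)) a) c"
    by (rule linext_comp[OF lin_embed])
  then show ?thesis by (simp add: F_embed[OF lin_rmul] rmul_single)
qed

lemma comm_opx: "opx k (rmul eta v w) = rmul eta (opx k v) w"
proof (rule lin_ext[where F="\<lambda>v. opx k (rmul eta v w)" and G="\<lambda>v. rmul eta (opx k v) w"])
  show "lin (\<lambda>v. opx k (rmul eta v w))" by (rule lin_comp[OF lin_opx lin_rmul])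
  show "lin (\<lambda>v. rmul eta (opx k v) w)" by (rule lin_comp[OF lin_rmul lin_opx])
  fix p :: "nat list \<times> (nat \<Rightarrow>\<^sub>0 nat)"
  obtain S a where p: "p = (S, a)" by (cases p)
  show "opx k (rmul eta (Poly_Mapping.single p 1) w) = rmul eta (opx k (Poly_Mapping.single p 1)) w"
    unfolding p by (simp add: rmul_single opx_single opx_embed)
qed

lemma comm_opd: "opd k (rmul eta v w) = rmul eta (opd k v) w"
proof (rule lin_ext[where F="\<lambda>v. opd k (rmul eta v w)" and G="\<lambda>v. rmul eta (opd k v) w"])
  show "lin (\<lambda>v. opd k (rmul eta v w))" by (rule lin_comp[OF lin_opd lin_rmul])
  show "lin (\<lambda>v. rmul eta (opd k v) w)" by (rule lin_comp[OF lin_rmul lin_opd])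
  fix p :: "nat list \<times> (nat \<Rightarrow>\<^sub>0 nat)"
  obtain S a where p: "p = (S, a)" by (cases p)
  show "opd k (rmul eta (Poly_Mapping.single p 1) w) = rmul eta (opd k (Poly_Mapping.single p 1)) w"
    unfolding p by (simp add: rmul_single opd_single opd_embed linD(2)[OF lin_rmul])
qed

lemma comm_opg: "opg eta k (rmul eta v w) = rmul eta (opg eta k v) w"
proof (rule lin_ext[where F="\<lambda>v. opg eta k (rmul eta v w)" and G="\<lambda>v. rmul eta (opg eta k v) w"])
  show "lin (\<lambda>v. opg eta k (rmul eta v w))" by (rule lin_comp[OF lin_opg lin_rmul])
  show "lin (\<lambda>v. rmul eta (opg eta k v) w)" by (rule lin_comp[OF lin_rmul lin_opg])
  fix p :: "nat list \<times> (nat \<Rightarrow>\<^sub>0 nat)"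
  obtain S a where p: "p = (S, a)" by (cases p)
  have A: "linext (\<lambda>T. cl_nf eta (T @ w)) (cl_ins eta k S) = linext (cl_ins eta k) (cl_nf eta (S @ w))"
    using A_lemma[of eta k S w] by simp
  show "opg eta k (rmul eta (Poly_Mapping.single p 1) w) = rmul eta (opg eta k (Poly_Mapping.single p 1)) w"
    unfolding p by (simp add: rmul_single opg_single opg_embed rmul_embed A L_def)
qed

lemma comm_xhat: "xhat n eta etainv i (rmul eta v w) = rmul eta (xhat n eta etainv i v) w"
  unfolding xhat_def opH_def opxlow_def opdup_def
  by (simp add: linD(1,2)[OF lin_rmul] lin_sum[OF lin_rmul]
      linD(1,2)[OF lin_opx] lin_sum[OF lin_opx]
      linD(1,2)[OF lin_opd] lin_sum[OF lin_opd]
      linD(1,2)[OF lin_opg] lin_sum[OF lin_opg]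
      comm_opx comm_opd comm_opg)

lemma gword_rmul: "V_gword eta alphas = rmul eta V_one alphas"
  by (simp add: V_gword_def rmul_def V_one_def linext_single)

lemma main: "foldr (xhat n eta etainv) idx (rmul eta V_one w) = rmul eta (foldr (xhat n eta etainv) idx V_one) w"
  by (induction idx) (simp_all add: comm_xhat)



theorem corollary6p2:
  fixes n :: nat and eta etainv :: "nat \<Rightarrow> nat \<Rightarrow> complex"
    and alphas idx :: "nat list"
  assumes "n \<ge> 1"
    and "\<forall>i\<in>{1..n}. \<forall>j\<in>{1..n}. eta i j = eta j i"
    and "\<forall>i\<in>{1..n}. \<forall>j\<in>{1..n}. (\<Sum>k=1..n. eta i k * etainv k j) = (if i = j then 1 else 0)"
    and "\<forall>i\<in>{1..n}. \<forall>j\<in>{1..n}. (\<Sum>k=1..n. etainv i k * eta k j) = (if i = j then 1 else 0)"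
    and "sorted alphas" and "set alphas \<subseteq> {1..n}"
    and "idx \<noteq> []" and "set idx \<subseteq> {1..n}"
  shows "foldr (xhat n eta etainv) idx (V_gword eta alphas)
         = rmul eta (foldr (xhat n eta etainv) idx V_one) alphas"
  by (simp only: gword_rmul main)

end
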